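(* Let $R$ be a Noetherian ring, $I\subseteq R$ an ideal, and $J_1=(f_1,\ldots,f_m)\subseteq I$, $J_2=(g_1,\ldots,g_m)\subseteq I$ ideals with $f_i-g_i\in I^2$ for $i=1,\ldots,m$, and assume $J_1\subseteq I$ is Aluffi torsion-free. Let $\mathcal Z_1,\mathcal Z_2\subseteq R^m$ be the syzygy modules of $(f_1,\dots,f_m)$ and $(g_1,\dots,g_m)$. Then $J_2\subseteq I$ is Aluffi torsion-free if and only if $\mathcal Z_1^*=\mathcal Z_2^*$ in $\mathrm{gr}_I(R^m)$.
   Context: A pair of ideals $J\subseteq I$ in a ring $R$ is called Aluffi torsion-free if $J\cap I^n=JI^{n-1}$ for all $n\ge1$ (with $I^0=R$). $\mathrm{gr}_I(R^m)=\bigoplus_{n\ge0}I^nR^m/I^{n+1}R^m$. For $0\ne a\in R^m$ let $n$ be the largest integer with $a\in I^nR^m$ (if it exists), and $a^*$ the class of $a$ in $I^nR^m/I^{n+1}R^m$ (and $a^*=0$ if $a\in\bigcap_n I^nR^m$). For a submodule $\mathcal Z\subseteq R^m$, its form module $\mathcal Z^*$ is the graded $\mathrm{gr}_I(R)$-submodule of $\mathrm{gr}_I(R^m)$ generated by $\{a^*:a\in\mathcal Z\}$. The syzygy module of $(f_1,\dots,f_m)$ is $\{(a_1,\ldots,a_m)\in R^m:\sum a_if_i=0\}$. *)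

theory Defs
  imports Main
begin

definition is_ideal :: "'a::comm_ring_1 set \<Rightarrow> bool" where
  "is_ideal J \<longleftrightarrow> 0 \<in> J \<and> (\<forall>x\<in>J. \<forall>y\<in>J. x + y \<in> J) \<and> (\<forall>r x. x \<in> J \<longrightarrow> r * x \<in> J)"

definition ideal_gen :: "'a::comm_ring_1 set \<Rightarrow> 'a set" where
  "ideal_gen S = \<Inter>{J. is_ideal J \<and> S \<subseteq> J}"

definition noetherian_ring :: "'a::comm_ring_1 itself \<Rightarrow> bool" where
  "noetherian_ring _ \<longleftrightarrow> (\<forall>J::'a set. is_ideal J \<longrightarrow> (\<exists>S. finite S \<and> J = ideal_gen S))"

definition ideal_prod :: "'a::comm_ring_1 set \<Rightarrow> 'a set \<Rightarrow> 'a set" where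
  "ideal_prod A B = ideal_gen {a * b | a b. a \<in> A \<and> b \<in> B}"

fun ideal_pow :: "'a::comm_ring_1 set \<Rightarrow> nat \<Rightarrow> 'a set" where
  "ideal_pow I 0 = UNIV"
| "ideal_pow I (Suc n) = ideal_prod (ideal_pow I n) I"

definition aluffi_torsion_free :: "'a::comm_ring_1 set \<Rightarrow> 'a set \<Rightarrow> bool" where
  "aluffi_torsion_free J I \<longleftrightarrow>
     (\<forall>n\<ge>1. J \<inter> ideal_pow I n = ideal_prod J (ideal_pow I (n - 1)))"

(* R^m: vectors indexed by {0..<m}, represented as functions nat \<Rightarrow> 'a vanishing at indices \<ge> m *)
definition vecs :: "nat \<Rightarrow> (nat \<Rightarrow> 'a::comm_ring_1) set" where
  "vecs m = {v. \<forall>i\<ge>m. v i = 0}"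

definition IM :: "'a::comm_ring_1 set \<Rightarrow> nat \<Rightarrow> nat \<Rightarrow> (nat \<Rightarrow> 'a) set" where
  "IM I m n = {v \<in> vecs m. \<forall>i<m. v i \<in> ideal_pow I n}"

definition syzygies :: "nat \<Rightarrow> (nat \<Rightarrow> 'a::comm_ring_1) \<Rightarrow> (nat \<Rightarrow> 'a) set" where
  "syzygies m f = {a \<in> vecs m. (\<Sum>i<m. a i * f i) = 0}"

definition coset :: "(nat \<Rightarrow> 'a::comm_ring_1) set \<Rightarrow> (nat \<Rightarrow> 'a) \<Rightarrow> (nat \<Rightarrow> 'a) set" where
  "coset A x = {(\<lambda>i. x i + v i) | v. v \<in> A}"

(* gr_I(R^m) = \<Oplus>_n I^n R^m / I^(n+1) R^m: an element is a function assigning to each degree n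
   a coset of I^(n+1) R^m contained in I^n R^m, with only finitely many nonzero components. *)
definition gr_mod :: "'a::comm_ring_1 set \<Rightarrow> nat \<Rightarrow> (nat \<Rightarrow> (nat \<Rightarrow> 'a) set) set" where
  "gr_mod I m = {G. (\<forall>n. \<exists>x\<in>IM I m n. G n = coset (IM I m (Suc n)) x)
                    \<and> finite {n. G n \<noteq> IM I m (Suc n)}}"

definition gr_zero :: "'a::comm_ring_1 set \<Rightarrow> nat \<Rightarrow> nat \<Rightarrow> (nat \<Rightarrow> 'a) set" where
  "gr_zero I m = (\<lambda>n. IM I m (Suc n))"

definition gr_add :: "(nat \<Rightarrow> (nat \<Rightarrow> 'a::comm_ring_1) set) \<Rightarrow> (nat \<Rightarrow> (nat \<Rightarrow> 'a) set) \<Rightarrow> nat \<Rightarrow> (nat \<Rightarrow> 'a) set" where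
  "gr_add G H = (\<lambda>n. {(\<lambda>i. a i + b i) | a b. a \<in> G n \<and> b \<in> H n})"

definition gr_hom :: "'a::comm_ring_1 set \<Rightarrow> nat \<Rightarrow> nat \<Rightarrow> (nat \<Rightarrow> 'a) \<Rightarrow> nat \<Rightarrow> (nat \<Rightarrow> 'a) set" where
  "gr_hom I m n x = (\<lambda>k. if k = n then coset (IM I m (Suc n)) x else IM I m (Suc k))"

(* action of the homogeneous element of gr_I(R) of degree k represented by r \<in> I^k *)
definition gr_smult :: "'a::comm_ring_1 set \<Rightarrow> nat \<Rightarrow> nat \<Rightarrow> 'a \<Rightarrow> (nat \<Rightarrow> (nat \<Rightarrow> 'a) set) \<Rightarrow> nat \<Rightarrow> (nat \<Rightarrow> 'a) set" where
  "gr_smult I m k r G = (\<lambda>j. if k \<le> j then {(\<lambda>i. r * v i + w i) | v w. v \<in> G (j - k) \<and> w \<in> IM I m (Suc j)}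
                             else IM I m (Suc j))"

definition init_form :: "'a::comm_ring_1 set \<Rightarrow> nat \<Rightarrow> (nat \<Rightarrow> 'a) \<Rightarrow> nat \<Rightarrow> (nat \<Rightarrow> 'a) set" where
  "init_form I m a = (if \<forall>n. a \<in> IM I m n then gr_zero I m
                      else gr_hom I m (GREATEST n. a \<in> IM I m n) a)"

(* graded gr_I(R)-submodule generated by a set of elements of gr_I(R^m): the smallest set
   containing them and 0, closed under addition and under multiplication by homogeneous
   elements of gr_I(R) (these generate gr_I(R) additively). *)
inductive_set gr_span :: "'a::comm_ring_1 set \<Rightarrow> nat \<Rightarrow> (nat \<Rightarrow> (nat \<Rightarrow> 'a) set) set \<Rightarrow> (nat \<Rightarrow> (nat \<Rightarrow> 'a) set) set"
  for I m S where
  span_zero: "gr_zero I m \<in> gr_span I m S"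
| span_gen: "G \<in> S \<Longrightarrow> G \<in> gr_span I m S"
| span_add: "G \<in> gr_span I m S \<Longrightarrow> H \<in> gr_span I m S \<Longrightarrow> gr_add G H \<in> gr_span I m S"
| span_smult: "r \<in> ideal_pow I k \<Longrightarrow> G \<in> gr_span I m S \<Longrightarrow> gr_smult I m k r G \<in> gr_span I m S"

definition form_module :: "'a::comm_ring_1 set \<Rightarrow> nat \<Rightarrow> (nat \<Rightarrow> 'a) set \<Rightarrow> (nat \<Rightarrow> (nat \<Rightarrow> 'a) set) set" where
  "form_module I m Z = gr_span I m (init_form I m ` Z)"

end

theory Submission
  imports Defs
begin

lemma ideal_gen_ideal: "is_ideal (ideal_gen S)"
  unfolding is_ideal_def ideal_gen_def by auto

lemma ideal_gen_sub: "S \<subseteq> ideal_gen S"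
  unfolding ideal_gen_def by auto

lemma ideal_gen_min: "is_ideal K \<Longrightarrow> S \<subseteq> K \<Longrightarrow> ideal_gen S \<subseteq> K"
  unfolding ideal_gen_def by auto

lemma ideal_0: "is_ideal K \<Longrightarrow> 0 \<in> K" by (simp add: is_ideal_def)
lemma ideal_add: "is_ideal K \<Longrightarrow> x \<in> K \<Longrightarrow> y \<in> K \<Longrightarrow> x + y \<in> K" by (simp add: is_ideal_def)
lemma ideal_mult: "is_ideal K \<Longrightarrow> x \<in> K \<Longrightarrow> r * x \<in> K" by (simp add: is_ideal_def)
lemma ideal_mult2: "is_ideal K \<Longrightarrow> x \<in> K \<Longrightarrow> x * r \<in> K"
  by (metis ideal_mult mult.commute)
lemma ideal_neg: "is_ideal K \<Longrightarrow> x \<in> K \<Longrightarrow> - x \<in> K"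
  using ideal_mult[of K x "-1"] by simp
lemma ideal_diff: "is_ideal K \<Longrightarrow> x \<in> K \<Longrightarrow> y \<in> K \<Longrightarrow> x - y \<in> K"
  using ideal_add[of K x "-y"] ideal_neg by fastforce
lemma ideal_sum: assumes "is_ideal K" "finite S" "\<And>i. i \<in> S \<Longrightarrow> h i \<in> K" shows "sum h S \<in> K"
  using assms(2,3) by (induction S rule: finite_induct) (auto intro: ideal_0[OF assms(1)] ideal_add[OF assms(1)])
lemma ideal_diff_iff: assumes K: "is_ideal K" and d: "x - y \<in> K" shows "x \<in> K \<longleftrightarrow> y \<in> K"
proof
  assume "x \<in> K" then have "x - (x - y) \<in> K" using ideal_diff[OF K _ d] by blast
  then show "y \<in> K" by simp
next
  assume "y \<in> K" then have "(x - y) + y \<in> K" using ideal_add[OF K d] by blast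
  then show "x \<in> K" by simp
qed

lemma ideal_UNIV: "is_ideal UNIV" by (simp add: is_ideal_def)

lemma ideal_pow_ideal: "is_ideal (ideal_pow I n)"
  by (cases n) (auto simp: ideal_UNIV ideal_prod_def ideal_gen_ideal)

lemma prod_gen: "a \<in> A \<Longrightarrow> b \<in> B \<Longrightarrow> a * b \<in> ideal_prod A B"
  unfolding ideal_prod_def by (rule subsetD[OF ideal_gen_sub]) blast

lemma ideal_pow_mult:
  "r \<in> ideal_pow I k \<Longrightarrow> s \<in> ideal_pow I j \<Longrightarrow> r * s \<in> ideal_pow I (k + j)"
proof (induction j arbitrary: s)
  case 0
  then show ?case using ideal_mult2[OF ideal_pow_ideal] by simp
next
  case (Suc j)
  let ?K = "{s. r * s \<in> ideal_pow I (k + Suc j)}"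
  have K: "is_ideal ?K"
    unfolding is_ideal_def using ideal_pow_ideal[of I "k + Suc j"]
    by (auto simp: distrib_left intro: ideal_0 ideal_add)
       (metis ideal_mult mult.left_commute)
  have "{a * b |a b. a \<in> ideal_pow I j \<and> b \<in> I} \<subseteq> ?K"
  proof
    fix x assume "x \<in> {a * b |a b. a \<in> ideal_pow I j \<and> b \<in> I}"
    then obtain a b where x: "x = a * b" "a \<in> ideal_pow I j" "b \<in> I" by blast
    have "r * a \<in> ideal_pow I (k + j)" using Suc.IH Suc.prems(1) x(2) by blast
    then have "(r * a) * b \<in> ideal_pow I (Suc (k + j))" using prod_gen x(3) by simp
    then show "x \<in> ?K" using x by (simp add: mult.assoc)
  qed
  then have "ideal_pow I (Suc j) \<subseteq> ?K"
    using ideal_gen_min[OF K] by (simp add: ideal_prod_def)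
  then show ?case using Suc.prems by blast
qed

lemma ideal_pow_Suc_sub: "ideal_pow I (Suc n) \<subseteq> ideal_pow I n"
proof -
  have "{a * b |a b. a \<in> ideal_pow I n \<and> b \<in> I} \<subseteq> ideal_pow I n"
    using ideal_mult2[OF ideal_pow_ideal] by blast
  then show ?thesis using ideal_gen_min[OF ideal_pow_ideal] by (simp add: ideal_prod_def)
qed

lemma ideal_pow_anti: "n \<le> n' \<Longrightarrow> ideal_pow I n' \<subseteq> ideal_pow I n"
proof (induction n' rule: dec_induct)
  case (step k) then show ?case using ideal_pow_Suc_sub[of I k] by blast
qed simp

definition lc :: "(nat \<Rightarrow> 'a::comm_ring_1) \<Rightarrow> nat \<Rightarrow> 'a set \<Rightarrow> 'a set" where
  "lc f m A = {s. \<exists>c. (\<forall>i<m. c i \<in> A) \<and> s = (\<Sum>i<m. c i * f i)}"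

lemma lc_ideal: assumes "is_ideal A" shows "is_ideal (lc f m A)"
  unfolding is_ideal_def lc_def
proof (intro conjI allI ballI impI)
  show "0 \<in> {s. \<exists>c. (\<forall>i<m. c i \<in> A) \<and> s = (\<Sum>i<m. c i * f i)}"
    by (rule CollectI, rule exI[of _ "\<lambda>i. 0"]) (simp add: ideal_0 assms)
next
  fix x y assume "x \<in> {s. \<exists>c. (\<forall>i<m. c i \<in> A) \<and> s = (\<Sum>i<m. c i * f i)}"
    "y \<in> {s. \<exists>c. (\<forall>i<m. c i \<in> A) \<and> s = (\<Sum>i<m. c i * f i)}"
  then obtain c d where "\<forall>i<m. c i \<in> A" "x = (\<Sum>i<m. c i * f i)"
     "\<forall>i<m. d i \<in> A" "y = (\<Sum>i<m. d i * f i)" by blast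
  then show "x + y \<in> {s. \<exists>c. (\<forall>i<m. c i \<in> A) \<and> s = (\<Sum>i<m. c i * f i)}"
    by (intro CollectI exI[of _ "\<lambda>i. c i + d i"])
       (simp add: ideal_add assms distrib_right sum.distrib)
next
  fix r x assume "x \<in> {s. \<exists>c. (\<forall>i<m. c i \<in> A) \<and> s = (\<Sum>i<m. c i * f i)}"
  then obtain c where "\<forall>i<m. c i \<in> A" "x = (\<Sum>i<m. c i * f i)" by blast
  then show "r * x \<in> {s. \<exists>c. (\<forall>i<m. c i \<in> A) \<and> s = (\<Sum>i<m. c i * f i)}"
    by (intro CollectI exI[of _ "\<lambda>i. r * c i"])
       (simp add: ideal_mult assms sum_distrib_left mult.assoc)
qed

lemma lc_sub: "(\<And>i. i < m \<Longrightarrow> f i \<in> K) \<Longrightarrow> is_ideal K \<Longrightarrow> lc f m A \<subseteq> K"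
  unfolding lc_def by (auto intro!: ideal_sum ideal_mult)

lemma ideal_gen_fin: "ideal_gen (f ` {..<m}) = lc f m UNIV"
proof
  have "f ` {..<m} \<subseteq> lc f m UNIV"
  proof
    fix x assume "x \<in> f ` {..<m}"
    then obtain i where i: "i < m" "x = f i" by auto
    have "(\<Sum>j<m. (if j = i then 1 else 0) * f j) = (\<Sum>j<m. if j = i then f j else 0)"
      by (rule sum.cong) auto
    also have "\<dots> = f i" using i(1) by simp
    finally have "(\<Sum>j<m. (if j = i then 1 else 0) * f j) = f i" .
    then show "x \<in> lc f m UNIV" unfolding lc_def using i by (intro CollectI exI[of _ "\<lambda>j. if j = i then 1 else 0"]) auto
  qed
  then show "ideal_gen (f ` {..<m}) \<subseteq> lc f m UNIV"
    by (intro ideal_gen_min lc_ideal ideal_UNIV)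
next
  show "lc f m UNIV \<subseteq> ideal_gen (f ` {..<m})"
    using ideal_gen_sub[of "f ` {..<m}"] by (intro lc_sub ideal_gen_ideal) auto
qed

lemma ideal_prod_lc: assumes "is_ideal A"
  shows "ideal_prod (lc f m UNIV) A = lc f m A"
proof
  have "{a * b |a b. a \<in> lc f m UNIV \<and> b \<in> A} \<subseteq> lc f m A"
  proof
    fix x assume "x \<in> {a * b |a b. a \<in> lc f m UNIV \<and> b \<in> A}"
    then obtain c b where x: "x = (\<Sum>i<m. c i * f i) * b" "b \<in> A"
      unfolding lc_def by blast
    then show "x \<in> lc f m A" unfolding lc_def
      by (intro CollectI exI[of _ "\<lambda>i. c i * b"])
         (simp add: ideal_mult2 assms sum_distrib_right sum_distrib_left mult_ac)
  qed
  then show "ideal_prod (lc f m UNIV) A \<subseteq> lc f m A"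
    unfolding ideal_prod_def by (intro ideal_gen_min lc_ideal assms)
next
  show "lc f m A \<subseteq> ideal_prod (lc f m UNIV) A"
  proof
    fix x assume "x \<in> lc f m A"
    then obtain c where c: "\<forall>i<m. c i \<in> A" "x = (\<Sum>i<m. c i * f i)" unfolding lc_def by blast
    have "f i \<in> lc f m UNIV" if "i < m" for i
      using that ideal_gen_fin[of f m] ideal_gen_sub[of "f ` {..<m}"] by auto
    then have "c i * f i \<in> ideal_prod (lc f m UNIV) A" if "i < m" for i
      using prod_gen[of "f i" _ "c i" A] c(1) that by (simp add: mult.commute)
    then show "x \<in> ideal_prod (lc f m UNIV) A"
      unfolding c(2) ideal_prod_def by (intro ideal_sum ideal_gen_ideal) (auto simp: ideal_prod_def)
  qed
qed


definition sg :: "(nat \<Rightarrow> 'a::comm_ring_1) set \<Rightarrow> bool" where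
  "sg A \<longleftrightarrow> (\<lambda>i. 0) \<in> A \<and> (\<forall>a\<in>A. \<forall>b\<in>A. (\<lambda>i. a i + b i) \<in> A) \<and> (\<forall>a\<in>A. (\<lambda>i. - a i) \<in> A)"

lemma sg_0: "sg A \<Longrightarrow> (\<lambda>i. 0) \<in> A" by (simp add: sg_def)
lemma sg_add: "sg A \<Longrightarrow> a \<in> A \<Longrightarrow> b \<in> A \<Longrightarrow> (\<lambda>i. a i + b i) \<in> A" by (simp add: sg_def)
lemma sg_neg: "sg A \<Longrightarrow> a \<in> A \<Longrightarrow> (\<lambda>i. - a i) \<in> A" by (simp add: sg_def)
lemma sg_diff: "sg A \<Longrightarrow> a \<in> A \<Longrightarrow> b \<in> A \<Longrightarrow> (\<lambda>i. a i - b i) \<in> A"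
  using sg_add[of A a "\<lambda>i. - b i"] sg_neg[of A b] by simp

lemma coset_I: "v \<in> A \<Longrightarrow> z = (\<lambda>i. x i + v i) \<Longrightarrow> z \<in> coset A x"
  unfolding coset_def by blast

lemma coset_eq1: assumes "sg A" "(\<lambda>i. x i - y i) \<in> A" shows "coset A x \<subseteq> coset A y"
proof
  fix z assume "z \<in> coset A x"
  then obtain v where v: "v \<in> A" "z = (\<lambda>i. x i + v i)" unfolding coset_def by blast
  have "(\<lambda>i. (x i - y i) + v i) \<in> A" using sg_add[OF assms(1) assms(2) v(1)] by simp
  moreover have "z = (\<lambda>i. y i + ((x i - y i) + v i))" using v(2) by (simp add: algebra_simps)
  ultimately show "z \<in> coset A y" by (rule coset_I)
qed

lemma coset_eq: assumes "sg A" "(\<lambda>i. x i - y i) \<in> A" shows "coset A x = coset A y"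
proof -
  have "(\<lambda>i. y i - x i) \<in> A" using sg_neg[OF assms] by simp
  then show ?thesis using coset_eq1 assms by blast
qed

lemma coset_memD: "sg A \<Longrightarrow> z \<in> coset A y \<Longrightarrow> (\<lambda>i. z i - y i) \<in> A"
  unfolding coset_def by auto

lemma coset_self_mem: "sg A \<Longrightarrow> x \<in> coset A x"
  unfolding coset_def using sg_0[of A] by force

lemma coset_eqD: "sg A \<Longrightarrow> coset A x = coset A y \<Longrightarrow> (\<lambda>i. x i - y i) \<in> A"
  using coset_self_mem coset_memD by metis

lemma coset_zero: "coset A (\<lambda>i. 0) = A"
  unfolding coset_def by auto

lemma coset_in: "sg A \<Longrightarrow> x \<in> A \<Longrightarrow> coset A x = A"
  using coset_eq[of A x "\<lambda>i. 0"] coset_zero[of A] by simp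

lemma msum: assumes "sg A"
  shows "{(\<lambda>i. a i + b i) | a b. a \<in> coset A x \<and> b \<in> coset A y} = coset A (\<lambda>i. x i + y i)"
proof
  show "{(\<lambda>i. a i + b i) | a b. a \<in> coset A x \<and> b \<in> coset A y} \<subseteq> coset A (\<lambda>i. x i + y i)"
  proof
    fix z assume "z \<in> {(\<lambda>i. a i + b i) | a b. a \<in> coset A x \<and> b \<in> coset A y}"
    then obtain v w where vw: "v \<in> A" "w \<in> A" "z = (\<lambda>i. (x i + v i) + (y i + w i))"
      unfolding coset_def by blast
    have "(\<lambda>i. v i + w i) \<in> A" using sg_add[OF assms vw(1,2)] .
    moreover have "z = (\<lambda>i. (x i + y i) + (v i + w i))"
      using vw(3) by (simp add: algebra_simps)
    ultimately show "z \<in> coset A (\<lambda>i. x i + y i)" by (rule coset_I)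
  qed
next
  show "coset A (\<lambda>i. x i + y i) \<subseteq> {(\<lambda>i. a i + b i) | a b. a \<in> coset A x \<and> b \<in> coset A y}"
  proof
    fix z assume "z \<in> coset A (\<lambda>i. x i + y i)"
    then obtain v where v: "v \<in> A" "z = (\<lambda>i. (x i + y i) + v i)" unfolding coset_def by blast
    have "(\<lambda>i. x i + v i) \<in> coset A x" using v(1) unfolding coset_def by blast
    moreover have "y \<in> coset A y" using coset_self_mem[OF assms] .
    moreover have "z = (\<lambda>i. (x i + v i) + y i)" using v(2) by (simp add: algebra_simps)
    ultimately show "z \<in> {(\<lambda>i. a i + b i) | a b. a \<in> coset A x \<and> b \<in> coset A y}"
      by (intro CollectI exI[of _ "\<lambda>i. x i + v i"] exI[of _ y]) auto
  qed
qed

lemma IM_sg: "sg (IM I m n)"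
  unfolding sg_def IM_def vecs_def
  by (auto simp: ideal_0[OF ideal_pow_ideal] intro!: ideal_add[OF ideal_pow_ideal] ideal_neg[OF ideal_pow_ideal])

lemma IM_smult: "r \<in> ideal_pow I k \<Longrightarrow> x \<in> IM I m n \<Longrightarrow> (\<lambda>i. r * x i) \<in> IM I m (k + n)"
  unfolding IM_def vecs_def by (auto intro!: ideal_pow_mult)

lemma IM_anti: "n \<le> n' \<Longrightarrow> IM I m n' \<subseteq> IM I m n"
  unfolding IM_def using ideal_pow_anti by blast

lemma IM_0: "IM I m 0 = vecs m"
  unfolding IM_def by auto

lemma smult_set:
  assumes r: "r \<in> ideal_pow I k" and kj: "k \<le> j"
  shows "{(\<lambda>i. r * v i + w i) | v w. v \<in> coset (IM I m (Suc (j - k))) x \<and> w \<in> IM I m (Suc j)}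
         = coset (IM I m (Suc j)) (\<lambda>i. r * x i)"
proof
  show "{(\<lambda>i. r * v i + w i) | v w. v \<in> coset (IM I m (Suc (j - k))) x \<and> w \<in> IM I m (Suc j)}
         \<subseteq> coset (IM I m (Suc j)) (\<lambda>i. r * x i)"
  proof
    fix z assume "z \<in> {(\<lambda>i. r * v i + w i) | v w. v \<in> coset (IM I m (Suc (j - k))) x \<and> w \<in> IM I m (Suc j)}"
    then obtain u w where u: "u \<in> IM I m (Suc (j - k))" "w \<in> IM I m (Suc j)"
      "z = (\<lambda>i. r * (x i + u i) + w i)" unfolding coset_def by blast
    have "(\<lambda>i. r * u i) \<in> IM I m (k + Suc (j - k))" using IM_smult[OF r u(1)] .
    moreover have "k + Suc (j - k) = Suc j" using kj by simp
    ultimately have "(\<lambda>i. r * u i + w i) \<in> IM I m (Suc j)"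
      using sg_add[OF IM_sg] u(2) by (metis (no_types))
    moreover have "z = (\<lambda>i. r * x i + (r * u i + w i))" using u(3) by (simp add: algebra_simps)
    ultimately show "z \<in> coset (IM I m (Suc j)) (\<lambda>i. r * x i)" by (rule coset_I)
  qed
next
  show "coset (IM I m (Suc j)) (\<lambda>i. r * x i) \<subseteq>
    {(\<lambda>i. r * v i + w i) | v w. v \<in> coset (IM I m (Suc (j - k))) x \<and> w \<in> IM I m (Suc j)}"
  proof
    fix z assume "z \<in> coset (IM I m (Suc j)) (\<lambda>i. r * x i)"
    then obtain w where w: "w \<in> IM I m (Suc j)" "z = (\<lambda>i. r * x i + w i)" unfolding coset_def by blast
    have "x \<in> coset (IM I m (Suc (j - k))) x" using coset_self_mem[OF IM_sg] .
    then show "z \<in> {(\<lambda>i. r * v i + w i) | v w. v \<in> coset (IM I m (Suc (j - k))) x \<and> w \<in> IM I m (Suc j)}"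
      using w by blast
  qed
qed

definition Qs :: "'a::comm_ring_1 set \<Rightarrow> nat \<Rightarrow> (nat \<Rightarrow> 'a) set \<Rightarrow> nat \<Rightarrow> (nat \<Rightarrow> 'a) set set" where
  "Qs I m Z d = {coset (IM I m (Suc d)) x | x. x \<in> Z \<and> x \<in> IM I m d}"

definition Cs :: "'a::comm_ring_1 set \<Rightarrow> nat \<Rightarrow> (nat \<Rightarrow> 'a) set \<Rightarrow> (nat \<Rightarrow> (nat \<Rightarrow> 'a) set) set" where
  "Cs I m Z = {G. (\<forall>n. G n \<in> Qs I m Z n) \<and> finite {n. G n \<noteq> IM I m (Suc n)}}"

definition submod :: "nat \<Rightarrow> (nat \<Rightarrow> 'a::comm_ring_1) set \<Rightarrow> bool" where
  "submod m Z \<longleftrightarrow> Z \<subseteq> vecs m \<and> (\<lambda>i. 0) \<in> Z \<and> (\<forall>a\<in>Z. \<forall>b\<in>Z. (\<lambda>i. a i + b i) \<in> Z)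
     \<and> (\<forall>r. \<forall>a\<in>Z. (\<lambda>i. r * a i) \<in> Z)"

lemma Qs_I: "x \<in> Z \<Longrightarrow> x \<in> IM I m d \<Longrightarrow> X = coset (IM I m (Suc d)) x \<Longrightarrow> X \<in> Qs I m Z d"
  unfolding Qs_def by blast

lemma zero_Qs: assumes "submod m Z" shows "IM I m (Suc n) \<in> Qs I m Z n"
proof (rule Qs_I)
  show "(\<lambda>i. 0) \<in> Z" using assms by (simp add: submod_def)
  show "(\<lambda>i. 0) \<in> IM I m n" using sg_0[OF IM_sg] .
  show "IM I m (Suc n) = coset (IM I m (Suc n)) (\<lambda>i. 0)" by (simp add: coset_zero)
qed

lemma zero_Cs: "submod m Z \<Longrightarrow> gr_zero I m \<in> Cs I m Z"
  unfolding Cs_def gr_zero_def using zero_Qs by auto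

lemma hom_Cs: assumes "submod m Z" "x \<in> Z" "x \<in> IM I m N"
  shows "gr_hom I m N x \<in> Cs I m Z"
proof -
  have "gr_hom I m N x n \<in> Qs I m Z n" for n
    using zero_Qs[OF assms(1)] assms(2,3) unfolding gr_hom_def by (auto simp: Qs_def)
  moreover have "{n. gr_hom I m N x n \<noteq> IM I m (Suc n)} \<subseteq> {N}"
    unfolding gr_hom_def by auto
  ultimately show ?thesis unfolding Cs_def using finite_subset by blast
qed

lemma greatest_IM:
  assumes "\<not> (\<forall>n. x \<in> IM I m n)" "x \<in> vecs m"
  shows "x \<in> IM I m (GREATEST n. x \<in> IM I m n)"
proof -
  obtain n0 where n0: "x \<notin> IM I m n0" using assms(1) by blast
  have b: "y \<le> n0" if "x \<in> IM I m y" for y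
    using IM_anti[of n0 y I m] that n0 by (cases "n0 \<le> y") auto
  show ?thesis using GreatestI_nat[of "\<lambda>n. x \<in> IM I m n" 0 n0] b assms(2) IM_0 by auto
qed

lemma fm_sub:
  assumes sm: "submod m Z"
  shows "form_module I m Z \<subseteq> Cs I m Z"
proof
  fix G assume "G \<in> form_module I m Z"
  then have "G \<in> gr_span I m (init_form I m ` Z)" by (simp add: form_module_def)
  then show "G \<in> Cs I m Z"
  proof (induction rule: gr_span.induct)
    case span_zero
    then show ?case using zero_Cs[OF sm] .
  next
    case (span_gen G)
    then obtain x where x: "x \<in> Z" "G = init_form I m x" by blast
    show ?case
    proof (cases "\<forall>n. x \<in> IM I m n")
      case True
      then show ?thesis using x zero_Cs[OF sm] by (simp add: init_form_def)
    next
      case False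
      have "x \<in> vecs m" using sm x(1) by (auto simp: submod_def)
      then show ?thesis using x False greatest_IM[OF False] hom_Cs[OF sm]
        by (simp add: init_form_def)
    qed
  next
    case (span_add G H)
    let ?A = "\<lambda>n. IM I m (Suc n)"
    have 1: "gr_add G H n \<in> Qs I m Z n" for n
    proof -
      obtain x where x: "x \<in> Z" "x \<in> IM I m n" "G n = coset (?A n) x"
        using span_add.IH(1) unfolding Cs_def Qs_def by blast
      obtain y where y: "y \<in> Z" "y \<in> IM I m n" "H n = coset (?A n) y"
        using span_add.IH(2) unfolding Cs_def Qs_def by blast
      have "gr_add G H n = {(\<lambda>i. a i + b i) | a b. a \<in> G n \<and> b \<in> H n}"
        by (simp add: gr_add_def)
      also have "\<dots> = coset (?A n) (\<lambda>i. x i + y i)"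
        unfolding x(3) y(3) by (rule msum[OF IM_sg])
      finally have "gr_add G H n = coset (?A n) (\<lambda>i. x i + y i)" .
      moreover have "(\<lambda>i. x i + y i) \<in> Z" using sm x y by (simp add: submod_def)
      moreover have "(\<lambda>i. x i + y i) \<in> IM I m n" using sg_add[OF IM_sg] x y by blast
      ultimately show ?thesis unfolding Qs_def by blast
    qed
    have "{n. gr_add G H n \<noteq> ?A n} \<subseteq> {n. G n \<noteq> ?A n} \<union> {n. H n \<noteq> ?A n}"
    proof
      fix n assume "n \<in> {n. gr_add G H n \<noteq> ?A n}"
      moreover have "G n = ?A n \<Longrightarrow> H n = ?A n \<Longrightarrow> gr_add G H n = ?A n"
        using msum[OF IM_sg, of I m "Suc n" "\<lambda>i. 0" "\<lambda>i. 0"] coset_zero[of "?A n"]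
        unfolding gr_add_def by simp
      ultimately show "n \<in> {n. G n \<noteq> ?A n} \<union> {n. H n \<noteq> ?A n}" by blast
    qed
    then have "finite {n. gr_add G H n \<noteq> ?A n}"
      using span_add.IH unfolding Cs_def using finite_subset by blast
    then show ?case using 1 unfolding Cs_def by blast
  next
    case (span_smult r k G)
    let ?A = "\<lambda>n. IM I m (Suc n)"
    have 1: "gr_smult I m k r G j \<in> Qs I m Z j" for j
    proof (cases "k \<le> j")
      case True
      obtain x where x: "x \<in> Z" "x \<in> IM I m (j - k)" "G (j - k) = coset (?A (j - k)) x"
        using span_smult.IH unfolding Cs_def Qs_def by blast
      have "gr_smult I m k r G j = coset (?A j) (\<lambda>i. r * x i)"
        unfolding gr_smult_def x(3) using True smult_set[OF span_smult.hyps(1) True] by simp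
      moreover have "(\<lambda>i. r * x i) \<in> Z" using sm x by (simp add: submod_def)
      moreover have "(\<lambda>i. r * x i) \<in> IM I m j"
        using IM_smult[OF span_smult.hyps(1) x(2)] True by simp
      ultimately show ?thesis unfolding Qs_def by blast
    next
      case False
      then show ?thesis using zero_Qs[OF sm] by (simp add: gr_smult_def)
    qed
    have "{j. gr_smult I m k r G j \<noteq> ?A j} \<subseteq> (\<lambda>n. n + k) ` {n. G n \<noteq> ?A n}"
    proof
      fix j assume j: "j \<in> {j. gr_smult I m k r G j \<noteq> ?A j}"
      then have kj: "k \<le> j" by (auto simp: gr_smult_def)
      have "G (j - k) \<noteq> ?A (j - k)"
      proof
        assume "G (j - k) = ?A (j - k)"
        then have "G (j - k) = coset (?A (j - k)) (\<lambda>i. 0)" using coset_zero by metis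
        then have "gr_smult I m k r G j = coset (?A j) (\<lambda>i. r * 0)"
          unfolding gr_smult_def using kj smult_set[OF span_smult.hyps(1) kj, of m "\<lambda>i. 0"] by simp
        then show False using j coset_zero by (simp add: coset_zero)
      qed
      then show "j \<in> (\<lambda>n. n + k) ` {n. G n \<noteq> ?A n}" using kj
        by (intro image_eqI[of _ _ "j - k"]) auto
    qed
    then have "finite {j. gr_smult I m k r G j \<noteq> ?A j}"
      using span_smult.IH unfolding Cs_def using finite_subset by blast
    then show ?case using 1 unfolding Cs_def by blast
  qed
qed

lemma hom_span: assumes sm: "submod m Z" and x: "x \<in> Z" "x \<in> IM I m s"
  shows "gr_hom I m s x \<in> gr_span I m (init_form I m ` Z)"
proof (cases "x \<in> IM I m (Suc s)")
  case True
  have "gr_hom I m s x = gr_zero I m"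
  proof (rule ext)
    fix k show "gr_hom I m s x k = gr_zero I m k"
      using coset_in[OF IM_sg True] by (cases "k = s") (simp_all add: gr_hom_def gr_zero_def)
  qed
  then show ?thesis using gr_span.span_zero by metis
next
  case False
  have "(GREATEST n. x \<in> IM I m n) = s"
  proof (rule Greatest_equality)
    show "x \<in> IM I m s" using x(2) .
    fix y assume "x \<in> IM I m y"
    then show "y \<le> s" using False IM_anti[of "Suc s" y I m] by (cases "Suc s \<le> y") auto
  qed
  then have "init_form I m x = gr_hom I m s x"
    using False by (auto simp: init_form_def)
  then show ?thesis using gr_span.span_gen[of "init_form I m x"] x(1) by (metis imageI)
qed

lemma Cs_sub:
  assumes sm: "submod m Z"
  shows "Cs I m Z \<subseteq> form_module I m Z"
proof
  fix G assume G: "G \<in> Cs I m Z"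
  have "\<And>G. G \<in> Cs I m Z \<Longrightarrow> {n. G n \<noteq> IM I m (Suc n)} \<subseteq> S \<Longrightarrow> G \<in> gr_span I m (init_form I m ` Z)"
    if "finite S" for S
    using that
  proof (induction S rule: finite_induct)
    case empty
    then have "G = gr_zero I m" unfolding gr_zero_def by auto
    then show ?case using gr_span.span_zero by metis
  next
    case (insert s S)
    obtain x where x: "x \<in> Z" "x \<in> IM I m s" "G s = coset (IM I m (Suc s)) x"
      using insert.prems(1) unfolding Cs_def Qs_def by blast
    define H where "H = (\<lambda>n. if n = s then IM I m (Suc s) else G n)"
    have "H \<in> Cs I m Z"
    proof -
      have "H n \<in> Qs I m Z n" for n
        using insert.prems(1) zero_Qs[OF sm] unfolding H_def Cs_def by auto
      moreover have "{n. H n \<noteq> IM I m (Suc n)} \<subseteq> {n. G n \<noteq> IM I m (Suc n)}"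
        unfolding H_def by auto
      ultimately show ?thesis using insert.prems(1) unfolding Cs_def using finite_subset by blast
    qed
    moreover have "{n. H n \<noteq> IM I m (Suc n)} \<subseteq> S"
      using insert.prems(2) unfolding H_def by auto
    ultimately have H: "H \<in> gr_span I m (init_form I m ` Z)" using insert.IH by blast
    have "G = gr_add H (gr_hom I m s x)"
    proof
      fix n
      show "G n = gr_add H (gr_hom I m s x) n"
      proof (cases "n = s")
        case True
        then show ?thesis unfolding gr_add_def H_def gr_hom_def
          using msum[OF IM_sg, of I m "Suc s" "\<lambda>i. 0" x] coset_zero[of "IM I m (Suc s)"] x(3)
          by simp
      next
        case False
        obtain y where y: "G n = coset (IM I m (Suc n)) y"
          using insert.prems(1) unfolding Cs_def Qs_def by blast
        show ?thesis unfolding gr_add_def H_def gr_hom_def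
          using False msum[OF IM_sg, of I m "Suc n" y "\<lambda>i. 0"] coset_zero[of "IM I m (Suc n)"] y
          by simp
      qed
    qed
    then show ?case using gr_span.span_add[OF H hom_span[OF sm x(1,2)]] by simp
  qed
  moreover have "finite {n. G n \<noteq> IM I m (Suc n)}" using G unfolding Cs_def by blast
  ultimately show "G \<in> form_module I m Z" using G unfolding form_module_def by blast
qed

lemma fm_eq: "submod m Z \<Longrightarrow> form_module I m Z = Cs I m Z"
  using fm_sub Cs_sub by blast


lemma syz_submod: "submod m (syzygies m f)"
  unfolding submod_def syzygies_def vecs_def
  by (auto simp: distrib_right sum.distrib mult.assoc sum_distrib_left[symmetric])

lemma Cs_eq_iff: assumes "submod m Z1" "submod m Z2"
  shows "Cs I m Z1 = Cs I m Z2 \<longleftrightarrow> (\<forall>d. Qs I m Z1 d = Qs I m Z2 d)"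
proof
  assume "\<forall>d. Qs I m Z1 d = Qs I m Z2 d"
  then show "Cs I m Z1 = Cs I m Z2" unfolding Cs_def by simp
next
  assume eq: "Cs I m Z1 = Cs I m Z2"
  have sub: "Qs I m Za d \<subseteq> Qs I m Zb d" if "submod m Za" "Cs I m Za = Cs I m Zb" for Za Zb d
  proof
    fix X assume "X \<in> Qs I m Za d"
    then obtain x where x: "x \<in> Za" "x \<in> IM I m d" "X = coset (IM I m (Suc d)) x"
      unfolding Qs_def by blast
    have "gr_hom I m d x \<in> Cs I m Zb" using hom_Cs[OF that(1) x(1,2)] that(2) by simp
    then have "gr_hom I m d x d \<in> Qs I m Zb d" unfolding Cs_def by blast
    then show "X \<in> Qs I m Zb d" using x(3) by (simp add: gr_hom_def)
  qed
  show "\<forall>d. Qs I m Z1 d = Qs I m Z2 d"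
    using sub[OF assms(1) eq] sub[OF assms(2) eq[symmetric]] by blast
qed

definition Ls :: "'a::comm_ring_1 set \<Rightarrow> nat \<Rightarrow> (nat \<Rightarrow> 'a) \<Rightarrow> nat \<Rightarrow> (nat \<Rightarrow> 'a) set set" where
  "Ls I m f d = {coset (IM I m (Suc d)) a | a. a \<in> IM I m d \<and> (\<Sum>i<m. a i * f i) \<in> ideal_pow I (Suc (Suc d))}"

lemma Ls_I: "a \<in> IM I m d \<Longrightarrow> (\<Sum>i<m. a i * f i) \<in> ideal_pow I (Suc (Suc d))
   \<Longrightarrow> X = coset (IM I m (Suc d)) a \<Longrightarrow> X \<in> Ls I m f d"
  unfolding Ls_def by blast

lemma Q_sub_L: "Qs I m (syzygies m f) d \<subseteq> Ls I m f d"
proof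
  fix X assume "X \<in> Qs I m (syzygies m f) d"
  then obtain x where x: "x \<in> syzygies m f" "x \<in> IM I m d" "X = coset (IM I m (Suc d)) x"
    unfolding Qs_def by blast
  have "(\<Sum>i<m. x i * f i) = 0" using x(1) by (simp add: syzygies_def)
  moreover have "0 \<in> ideal_pow I (Suc (Suc d))" by (rule ideal_0[OF ideal_pow_ideal])
  ultimately have "(\<Sum>i<m. x i * f i) \<in> ideal_pow I (Suc (Suc d))" by (simp only:)
  then show "X \<in> Ls I m f d" using Ls_I x(2,3) by blast
qed

lemma L_eq: assumes "\<forall>i<m. f i - g i \<in> ideal_pow I 2"
  shows "Ls I m f d = Ls I m g d"
proof -
  have "(\<Sum>i<m. a i * f i) \<in> ideal_pow I (Suc (Suc d)) \<longleftrightarrow> (\<Sum>i<m. a i * g i) \<in> ideal_pow I (Suc (Suc d))"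
    if a: "a \<in> IM I m d" for a
  proof (rule ideal_diff_iff[OF ideal_pow_ideal])
    have "(\<Sum>i<m. a i * f i) - (\<Sum>i<m. a i * g i) = (\<Sum>i<m. a i * (f i - g i))"
      by (simp add: sum_subtractf right_diff_distrib)
    moreover have "(\<Sum>i<m. a i * (f i - g i)) \<in> ideal_pow I (Suc (Suc d))"
    proof (rule ideal_sum[OF ideal_pow_ideal], simp)
      fix i assume "i \<in> {..<m}"
      then have "a i \<in> ideal_pow I d" "f i - g i \<in> ideal_pow I 2" using a assms by (auto simp: IM_def)
      then show "a i * (f i - g i) \<in> ideal_pow I (Suc (Suc d))"
        using ideal_pow_mult[of "a i" I d "f i - g i" 2] by simp
    qed
    ultimately show "(\<Sum>i<m. a i * f i) - (\<Sum>i<m. a i * g i) \<in> ideal_pow I (Suc (Suc d))" by simp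
  qed
  then show ?thesis unfolding Ls_def by blast
qed

definition cond :: "'a::comm_ring_1 set \<Rightarrow> nat \<Rightarrow> (nat \<Rightarrow> 'a) \<Rightarrow> bool" where
  "cond I m f \<longleftrightarrow> (\<forall>d c. (\<Sum>i<m. c i * f i) \<in> ideal_pow I (Suc d) \<longrightarrow>
      (\<exists>c'. (\<forall>i<m. c' i \<in> ideal_pow I d) \<and> (\<Sum>i<m. c' i * f i) = (\<Sum>i<m. c i * f i)))"

lemma lc_pow_sub: assumes "\<forall>i<m. f i \<in> I"
  shows "lc f m (ideal_pow I d) \<subseteq> ideal_pow I (Suc d)"
proof
  fix x assume "x \<in> lc f m (ideal_pow I d)"
  then obtain c where c: "\<forall>i<m. c i \<in> ideal_pow I d" "x = (\<Sum>i<m. c i * f i)" unfolding lc_def by blast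
  show "x \<in> ideal_pow I (Suc d)" unfolding c(2)
  proof (rule ideal_sum[OF ideal_pow_ideal])
    show "finite {..<m}" by simp
    fix i assume "i \<in> {..<m}"
    then show "c i * f i \<in> ideal_pow I (Suc d)"
      using c(1) assms prod_gen[of "c i" "ideal_pow I d" "f i" I] by simp
  qed
qed

lemma atf_iff: assumes fI: "\<forall>i<m. f i \<in> I"
  shows "aluffi_torsion_free (ideal_gen (f ` {..<m})) I \<longleftrightarrow> cond I m f"
proof -
  have "aluffi_torsion_free (ideal_gen (f ` {..<m})) I \<longleftrightarrow>
        (\<forall>n\<ge>1. lc f m UNIV \<inter> ideal_pow I n = lc f m (ideal_pow I (n - 1)))"
    unfolding aluffi_torsion_free_def ideal_gen_fin ideal_prod_lc[OF ideal_pow_ideal] ..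
  also have "\<dots> \<longleftrightarrow> (\<forall>d. lc f m UNIV \<inter> ideal_pow I (Suc d) \<subseteq> lc f m (ideal_pow I d))"
  proof
    assume "\<forall>n\<ge>1. lc f m UNIV \<inter> ideal_pow I n = lc f m (ideal_pow I (n - 1))"
    then show "\<forall>d. lc f m UNIV \<inter> ideal_pow I (Suc d) \<subseteq> lc f m (ideal_pow I d)"
      by (metis One_nat_def Suc_le_mono diff_Suc_1 le0 order_refl)
  next
    assume h: "\<forall>d. lc f m UNIV \<inter> ideal_pow I (Suc d) \<subseteq> lc f m (ideal_pow I d)"
    show "\<forall>n\<ge>1. lc f m UNIV \<inter> ideal_pow I n = lc f m (ideal_pow I (n - 1))"
    proof (intro allI impI)
      fix n :: nat assume "n \<ge> 1"
      then obtain d where n: "n = Suc d" by (cases n) auto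
      have "lc f m (ideal_pow I d) \<subseteq> lc f m UNIV" unfolding lc_def by auto
      then show "lc f m UNIV \<inter> ideal_pow I n = lc f m (ideal_pow I (n - 1))"
        using h lc_pow_sub[OF fI, of d] n by auto
    qed
  qed
  also have "\<dots> \<longleftrightarrow> cond I m f"
  proof
    assume h: "\<forall>d. lc f m UNIV \<inter> ideal_pow I (Suc d) \<subseteq> lc f m (ideal_pow I d)"
    show "cond I m f" unfolding cond_def
    proof (intro allI impI)
      fix d c assume c: "(\<Sum>i<m. c i * f i) \<in> ideal_pow I (Suc d)"
      have "(\<Sum>i<m. c i * f i) \<in> lc f m UNIV" unfolding lc_def by blast
      then have "(\<Sum>i<m. c i * f i) \<in> lc f m (ideal_pow I d)" using h c by blast
      then obtain c' where "\<forall>i<m. c' i \<in> ideal_pow I d" "(\<Sum>i<m. c i * f i) = (\<Sum>i<m. c' i * f i)"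
        unfolding lc_def by blast
      then show "\<exists>c'. (\<forall>i<m. c' i \<in> ideal_pow I d) \<and> (\<Sum>i<m. c' i * f i) = (\<Sum>i<m. c i * f i)"
        by (intro exI[of _ c']) simp
    qed
  next
    assume h: "cond I m f"
    show "\<forall>d. lc f m UNIV \<inter> ideal_pow I (Suc d) \<subseteq> lc f m (ideal_pow I d)"
    proof (intro allI subsetI)
      fix d x assume x: "x \<in> lc f m UNIV \<inter> ideal_pow I (Suc d)"
      then obtain c where c: "x = (\<Sum>i<m. c i * f i)" unfolding lc_def by blast
      then obtain c' where "\<forall>i<m. c' i \<in> ideal_pow I d" "(\<Sum>i<m. c' i * f i) = x"
        using h x unfolding cond_def by blast
      then show "x \<in> lc f m (ideal_pow I d)" unfolding lc_def by (intro CollectI exI[of _ c']) simp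
    qed
  qed
  finally show ?thesis .
qed

lemma atf_L: "cond I m f \<longleftrightarrow> (\<forall>d. Ls I m f d \<subseteq> Qs I m (syzygies m f) d)"
proof
  assume h: "cond I m f"
  show "\<forall>d. Ls I m f d \<subseteq> Qs I m (syzygies m f) d"
  proof (intro allI subsetI)
    fix d X assume "X \<in> Ls I m f d"
    then obtain a where a: "a \<in> IM I m d" "(\<Sum>i<m. a i * f i) \<in> ideal_pow I (Suc (Suc d))"
      "X = coset (IM I m (Suc d)) a" unfolding Ls_def by blast
    obtain c' where c': "\<forall>i<m. c' i \<in> ideal_pow I (Suc d)" "(\<Sum>i<m. c' i * f i) = (\<Sum>i<m. a i * f i)"
      using h a(2) unfolding cond_def by blast
    define b where "b = (\<lambda>i. if i < m then a i - c' i else 0)"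
    have "(\<Sum>i<m. b i * f i) = (\<Sum>i<m. a i * f i - c' i * f i)"
      unfolding b_def by (rule sum.cong) (auto simp: left_diff_distrib)
    also have "\<dots> = 0" using c'(2) by (simp add: sum_subtractf)
    finally have bs: "b \<in> syzygies m f" unfolding syzygies_def vecs_def b_def by auto
    have bI: "b \<in> IM I m d"
      using a(1) c'(1) ideal_pow_Suc_sub[of I d] unfolding b_def IM_def vecs_def
      by (auto intro!: ideal_diff[OF ideal_pow_ideal])
    have "(\<lambda>i. a i - b i) \<in> IM I m (Suc d)"
      using a(1) c'(1) unfolding b_def IM_def vecs_def by auto
    then have "X = coset (IM I m (Suc d)) b" using a(3) coset_eq[OF IM_sg] by metis
    then show "X \<in> Qs I m (syzygies m f) d" unfolding Qs_def using bs bI by blast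
  qed
next
  assume h: "\<forall>d. Ls I m f d \<subseteq> Qs I m (syzygies m f) d"
  show "cond I m f" unfolding cond_def
  proof (intro allI impI)
    fix d c assume c: "(\<Sum>i<m. c i * f i) \<in> ideal_pow I (Suc d)"
    have "k \<le> d \<Longrightarrow> \<exists>c'. (\<forall>i<m. c' i \<in> ideal_pow I k) \<and> (\<Sum>i<m. c' i * f i) = (\<Sum>i<m. c i * f i)" for k
    proof (induction k)
      case 0
      then show ?case by (intro exI[of _ c]) simp
    next
      case (Suc k)
      then obtain c' where c': "\<forall>i<m. c' i \<in> ideal_pow I k" "(\<Sum>i<m. c' i * f i) = (\<Sum>i<m. c i * f i)"
        by auto
      define a where "a = (\<lambda>i. if i < m then c' i else 0)"
      have aI: "a \<in> IM I m k" using c'(1) unfolding a_def IM_def vecs_def by auto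
      have "(\<Sum>i<m. a i * f i) = (\<Sum>i<m. c' i * f i)" unfolding a_def by (rule sum.cong) auto
      then have sa: "(\<Sum>i<m. a i * f i) = (\<Sum>i<m. c i * f i)" using c'(2) by simp
      have "(\<Sum>i<m. a i * f i) \<in> ideal_pow I (Suc (Suc k))"
        using sa c ideal_pow_anti[of "Suc (Suc k)" "Suc d" I] Suc.prems by auto
      then have "coset (IM I m (Suc k)) a \<in> Ls I m f k" unfolding Ls_def using aI by blast
      then have "coset (IM I m (Suc k)) a \<in> Qs I m (syzygies m f) k" using h by blast
      then obtain b where b: "b \<in> syzygies m f" "coset (IM I m (Suc k)) a = coset (IM I m (Suc k)) b"
        unfolding Qs_def by auto
      have ab: "(\<lambda>i. a i - b i) \<in> IM I m (Suc k)" using coset_eqD[OF IM_sg b(2)] .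
      have "(\<Sum>i<m. (a i - b i) * f i) = (\<Sum>i<m. a i * f i) - (\<Sum>i<m. b i * f i)"
        by (simp add: sum_subtractf left_diff_distrib)
      also have "\<dots> = (\<Sum>i<m. c i * f i)" using sa b(1) by (simp add: syzygies_def)
      finally show ?case using ab unfolding IM_def by (intro exI[of _ "\<lambda>i. a i - b i"]) auto
    qed
    then show "\<exists>c'. (\<forall>i<m. c' i \<in> ideal_pow I d) \<and> (\<Sum>i<m. c' i * f i) = (\<Sum>i<m. c i * f i)"
      by simp
  qed
qed

theorem corollary2p8:
  fixes I :: "'a::comm_ring_1 set" and f g :: "nat \<Rightarrow> 'a" and m :: nat
  assumes "noetherian_ring TYPE('a)"
    and "is_ideal I"
    and "ideal_gen (f ` {..<m}) \<subseteq> I"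
    and "ideal_gen (g ` {..<m}) \<subseteq> I"
    and "\<forall>i<m. f i - g i \<in> ideal_pow I 2"
    and "aluffi_torsion_free (ideal_gen (f ` {..<m})) I"
  shows "aluffi_torsion_free (ideal_gen (g ` {..<m})) I \<longleftrightarrow>
         form_module I m (syzygies m f) = form_module I m (syzygies m g)"
proof -
  have fI: "\<forall>i<m. f i \<in> I" using assms(3) ideal_gen_sub[of "f ` {..<m}"] by auto
  have gI: "\<forall>i<m. g i \<in> I" using assms(4) ideal_gen_sub[of "g ` {..<m}"] by auto
  have Lfg: "Ls I m f d = Ls I m g d" for d using L_eq[OF assms(5)] .
  have Qf: "Qs I m (syzygies m f) d = Ls I m f d" for d
    using assms(6) atf_iff[OF fI] atf_L[of I m f] Q_sub_L[of I m f d] by blast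
  have "form_module I m (syzygies m f) = form_module I m (syzygies m g) \<longleftrightarrow>
        (\<forall>d. Qs I m (syzygies m f) d = Qs I m (syzygies m g) d)"
    unfolding fm_eq[OF syz_submod] by (rule Cs_eq_iff[OF syz_submod syz_submod])
  also have "\<dots> \<longleftrightarrow> (\<forall>d. Ls I m g d \<subseteq> Qs I m (syzygies m g) d)"
    using Qf Lfg Q_sub_L[of I m g] by blast
  also have "\<dots> \<longleftrightarrow> aluffi_torsion_free (ideal_gen (g ` {..<m})) I"
    using atf_iff[OF gI] atf_L[of I m g] by simp
  finally show ?thesis by simp
qed

end
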